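(* Let $d\ge3$. For $N\in\mathbb{N}$ let $A_N$ be the number of subgroups $\Lambda\subseteq\mathbb{Z}^d$ of index at most $N$ for which there exist a monic $f\in\mathbb{Z}[X]$ of degree $d$ and an ideal $I\subseteq\mathbb{Z}[X]/(f)$ with $\Lambda=\rho_f(I)$, and let $B_N$ be the number of all subgroups of $\mathbb{Z}^d$ of index at most $N$. Then $A_N/B_N\to0$ as $N\to\infty$.
   Context: For a monic $f\in\mathbb{Z}[X]$ of degree $d$, $\rho_f:\mathbb{Z}[X]/(f)\to\mathbb{Z}^d$ is the group isomorphism sending the class of $\sum_{n=0}^{d-1}a_nX^n$ (representative of degree $<d$) to $(a_0,\dots,a_{d-1})$. *)

theory Defs
  imports Complex_Main "HOL-Computational_Algebra.Polynomial"
begin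

definition Zd :: "nat \<Rightarrow> (nat \<Rightarrow> int) set" where
  "Zd d = {v. \<forall>i\<ge>d. v i = 0}"

definition is_subgroup_Zd :: "nat \<Rightarrow> (nat \<Rightarrow> int) set \<Rightarrow> bool" where
  "is_subgroup_Zd d L \<longleftrightarrow> L \<subseteq> Zd d \<and> (\<lambda>i. 0) \<in> L \<and>
     (\<forall>u\<in>L. \<forall>v\<in>L. (\<lambda>i. u i + v i) \<in> L) \<and> (\<forall>u\<in>L. (\<lambda>i. - u i) \<in> L)"

definition cosets_Zd :: "nat \<Rightarrow> (nat \<Rightarrow> int) set \<Rightarrow> (nat \<Rightarrow> int) set set" where
  "cosets_Zd d L = {(\<lambda>w. (\<lambda>i. v i + w i)) ` L | v. v \<in> Zd d}"

definition index_at_most :: "nat \<Rightarrow> (nat \<Rightarrow> int) set \<Rightarrow> nat \<Rightarrow> bool" where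
  "index_at_most d L N \<longleftrightarrow> finite (cosets_Zd d L) \<and> card (cosets_Zd d L) \<le> N"

definition is_ideal_Zx :: "int poly set \<Rightarrow> bool" where
  "is_ideal_Zx J \<longleftrightarrow> 0 \<in> J \<and> (\<forall>a\<in>J. \<forall>b\<in>J. a + b \<in> J) \<and> (\<forall>a\<in>J. \<forall>r. r * a \<in> J)"

text \<open>Ideals I of Z[X]/(f) correspond to ideals J of Z[X] containing f
  (I = J/(f)). Each class has a unique representative of degree < deg f,
  and rho_f sends it to its coefficient vector; hence
  rho_f(J/(f)) = coefficient vectors of elements of J of degree < deg f.\<close>
definition rho_ideal :: "int poly \<Rightarrow> int poly set \<Rightarrow> (nat \<Rightarrow> int) set" where
  "rho_ideal f J = {(\<lambda>i. coeff p i) | p. p \<in> J \<and> degree p < degree f}"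

definition ideal_lattice :: "nat \<Rightarrow> (nat \<Rightarrow> int) set \<Rightarrow> bool" where
  "ideal_lattice d L \<longleftrightarrow> (\<exists>f J. lead_coeff f = 1 \<and> degree f = d \<and>
      is_ideal_Zx J \<and> f \<in> J \<and> L = rho_ideal f J)"

definition A_count :: "nat \<Rightarrow> nat \<Rightarrow> nat" where
  "A_count d N = card {L. is_subgroup_Zd d L \<and> index_at_most d L N \<and> ideal_lattice d L}"

definition B_count :: "nat \<Rightarrow> nat \<Rightarrow> nat" where
  "B_count d N = card {L. is_subgroup_Zd d L \<and> index_at_most d L N}"

end

theory Submission
  imports Defs "HOL-Library.FuncSet"
begin

definition shiftv :: "(nat \<Rightarrow> int) \<Rightarrow> nat \<Rightarrow> int" where
  "shiftv v = (\<lambda>i. if i = 0 then 0 else v (i - 1))"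

definition cc :: "(nat \<Rightarrow> int) set \<Rightarrow> nat \<Rightarrow> int" where
  "cc L k = int (LEAST t::nat. 0 < t \<and> (\<exists>v\<in>L. (\<forall>i>k. v i = 0) \<and> v k = int t))"

definition rw :: "(nat \<Rightarrow> int) set \<Rightarrow> nat \<Rightarrow> nat \<Rightarrow> int" where
  "rw L k = (SOME v. v \<in> L \<and> (\<forall>i>k. v i = 0) \<and> v k = cc L k \<and> (\<forall>i<k. 0 \<le> v i \<and> v i < cc L i))"

primrec memb :: "(nat \<Rightarrow> int) \<Rightarrow> (nat \<Rightarrow> nat \<Rightarrow> int) \<Rightarrow> nat \<Rightarrow> (nat \<Rightarrow> int) \<Rightarrow> bool" where
  "memb c r 0 v = (\<forall>i. v i = 0)"
| "memb c r (Suc k) v = (c k dvd v k \<and> memb c r k (\<lambda>i. v i - (v k div c k) * r k i))"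

lemma memb_cong:
  "(\<And>i. i < n \<Longrightarrow> c i = c' i \<and> r i = r' i) \<Longrightarrow> memb c r n v = memb c' r' n v"
  by (induction n arbitrary: v) auto

locale lat =
  fixes d :: nat and L :: "(nat \<Rightarrow> int) set"
  assumes sg: "is_subgroup_Zd d L" and fc: "finite (cosets_Zd d L)"
begin

lemma subZ: "v \<in> L \<Longrightarrow> i \<ge> d \<Longrightarrow> v i = 0"
  using sg unfolding is_subgroup_Zd_def Zd_def by blast

lemma zero_in: "(\<lambda>i. 0) \<in> L"
  using sg unfolding is_subgroup_Zd_def by blast

lemma add_in: "u \<in> L \<Longrightarrow> v \<in> L \<Longrightarrow> (\<lambda>i. u i + v i) \<in> L"
  using sg unfolding is_subgroup_Zd_def by blast

lemma neg_in: "u \<in> L \<Longrightarrow> (\<lambda>i. - u i) \<in> L"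
  using sg unfolding is_subgroup_Zd_def by blast

lemma diff_in: "u \<in> L \<Longrightarrow> v \<in> L \<Longrightarrow> (\<lambda>i. u i - v i) \<in> L"
  using add_in[of u "\<lambda>i. - v i"] neg_in[of v] by simp

lemma nsmul_in: "v \<in> L \<Longrightarrow> (\<lambda>i. int n * v i) \<in> L"
proof (induction n)
  case 0 then show ?case using zero_in by simp
next
  case (Suc n)
  then have "(\<lambda>i. int n * v i + v i) \<in> L" using add_in by blast
  then show ?case by (simp add: algebra_simps)
qed

lemma smul_in: "v \<in> L \<Longrightarrow> (\<lambda>i. t * v i) \<in> L"
proof (cases "t \<ge> 0")
  case True
  assume v: "v \<in> L"
  then show ?thesis using nsmul_in[OF v, of "nat t"] True by simp
next
  case False
  assume v: "v \<in> L"
  have "(\<lambda>i. - (int (nat (-t)) * v i)) \<in> L" using neg_in[OF nsmul_in[OF v, of "nat (-t)"]] .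
  then show ?thesis using False by simp
qed

lemma lin_in: "u \<in> L \<Longrightarrow> v \<in> L \<Longrightarrow> (\<lambda>i. u i - t * v i) \<in> L"
  using diff_in[of u "\<lambda>i. t * v i"] smul_in by blast

lemma coset_eq_diff:
  assumes "(\<lambda>w. (\<lambda>i. u i + w i)) ` L = (\<lambda>w. (\<lambda>i. v i + w i)) ` L"
  shows "(\<lambda>i. u i - v i) \<in> L"
proof -
  have "u \<in> (\<lambda>w. (\<lambda>i. u i + w i)) ` L" using zero_in by force
  then obtain w where "w \<in> L" "u = (\<lambda>i. v i + w i)" using assms by auto
  then show ?thesis by simp
qed

lemma mult_exists:
  assumes k: "k < d"
  shows "\<exists>t::int. t > 0 \<and> (\<lambda>i. if i = k then t else 0) \<in> L"
proof -
  define e where "e = (\<lambda>(j::nat) i. if i = k then int j else (0::int))"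
  define f where "f = (\<lambda>j. (\<lambda>w. (\<lambda>i. e j i + w i)) ` L)"
  have fin: "f ` {0..card (cosets_Zd d L)} \<subseteq> cosets_Zd d L"
    unfolding f_def cosets_Zd_def Zd_def e_def using k by auto
  have "\<not> inj_on f {0..card (cosets_Zd d L)}"
  proof
    assume "inj_on f {0..card (cosets_Zd d L)}"
    from card_inj_on_le[OF this fin fc] show False by simp
  qed
  then obtain a b where ab: "a \<noteq> b" "f a = f b" unfolding inj_on_def by blast
  have D: "(\<lambda>i. e a i - e b i) \<in> L" using coset_eq_diff ab(2) unfolding f_def by blast
  show ?thesis
  proof (cases "a > b")
    case True
    have "(\<lambda>i. e a i - e b i) = (\<lambda>i. if i = k then int a - int b else 0)"
      unfolding e_def by auto
    then show ?thesis using D True by (intro exI[of _ "int a - int b"]) auto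
  next
    case False
    then have "b > a" using ab by simp
    have "(\<lambda>i. - (e a i - e b i)) = (\<lambda>i. if i = k then int b - int a else 0)"
      unfolding e_def by auto
    then show ?thesis using neg_in[OF D] \<open>b > a\<close> by (intro exI[of _ "int b - int a"]) auto
  qed
qed

lemma cc_ex:
  assumes k: "k < d"
  shows "\<exists>t::nat. 0 < t \<and> (\<exists>v\<in>L. (\<forall>i>k. v i = 0) \<and> v k = int t)"
proof -
  obtain t where t: "t > 0" "(\<lambda>i. if i = k then t else 0) \<in> L" using mult_exists[OF k] by blast
  show ?thesis
    by (rule exI[of _ "nat t"]) (use t in \<open>auto intro!: bexI[of _ "(\<lambda>i. if i = k then t else 0)"]\<close>)
qed

lemma cc_pos: "k < d \<Longrightarrow> cc L k > 0"
  using LeastI_ex[OF cc_ex] unfolding cc_def by auto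

lemma cc_row: "k < d \<Longrightarrow> \<exists>v\<in>L. (\<forall>i>k. v i = 0) \<and> v k = cc L k"
  using LeastI_ex[OF cc_ex] unfolding cc_def by auto

lemma cc_least:
  assumes "v \<in> L" "\<forall>i>k. v i = 0" "v k > 0"
  shows "cc L k \<le> v k"
proof -
  have "(LEAST t::nat. 0 < t \<and> (\<exists>v\<in>L. (\<forall>i>k. v i = 0) \<and> v k = int t)) \<le> nat (v k)"
    by (rule Least_le) (use assms in auto)
  then show ?thesis unfolding cc_def using assms by linarith
qed

lemma cc_dvd:
  assumes k: "k < d" and v: "v \<in> L" "\<forall>i>k. v i = 0"
  shows "cc L k dvd v k"
proof (rule ccontr)
  assume nd: "\<not> cc L k dvd v k"
  obtain r where r: "r \<in> L" "\<forall>i>k. r i = 0" "r k = cc L k" using cc_row[OF k] by blast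
  define w where "w = (\<lambda>i. v i - (v k div cc L k) * r i)"
  have w: "w \<in> L" unfolding w_def using lin_in r v by blast
  have ws: "\<forall>i>k. w i = 0" unfolding w_def using r v by auto
  have wk: "w k = v k mod cc L k" unfolding w_def r(3) by (simp add: minus_div_mult_eq_mod[symmetric] algebra_simps)
  have "w k \<noteq> 0" using nd wk by (simp add: dvd_eq_mod_eq_0)
  moreover have "w k \<ge> 0" "w k < cc L k" using wk cc_pos[OF k] by auto
  ultimately show False using cc_least[OF w ws] by auto
qed

end

context lat
begin

lemma reduce:
  "n \<le> d \<Longrightarrow> \<exists>u\<in>L. (\<forall>i\<ge>n. u i = 0) \<and> (\<forall>i<n. 0 \<le> v i - u i \<and> v i - u i < cc L i)"
proof (induction n arbitrary: v)
  case 0 then show ?case using zero_in by auto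
next
  case (Suc n)
  then have n: "n < d" by simp
  obtain r where r: "r \<in> L" "\<forall>i>n. r i = 0" "r n = cc L n" using cc_row[OF n] by blast
  define t where "t = v n div cc L n"
  define v' where "v' = (\<lambda>i. v i - t * r i)"
  obtain u' where u': "u' \<in> L" "\<forall>i\<ge>n. u' i = 0" "\<forall>i<n. 0 \<le> v' i - u' i \<and> v' i - u' i < cc L i"
    using Suc.IH[of v'] n by auto
  define u where "u = (\<lambda>i. u' i + t * r i)"
  have "u \<in> L" unfolding u_def using add_in[OF u'(1) smul_in[OF r(1)]] .
  moreover have "\<forall>i\<ge>Suc n. u i = 0" unfolding u_def using u'(2) r(2) by auto
  moreover have "\<forall>i<Suc n. 0 \<le> v i - u i \<and> v i - u i < cc L i"
  proof (intro allI impI)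
    fix i assume i: "i < Suc n"
    show "0 \<le> v i - u i \<and> v i - u i < cc L i"
    proof (cases "i = n")
      case True
      have "v i - u i = v n mod cc L n" using True u'(2) r(3) unfolding u_def t_def
        by (simp add: minus_div_mult_eq_mod[symmetric] algebra_simps)
      then show ?thesis using cc_pos[OF n] True by simp
    next
      case False
      then have "i < n" using i by simp
      have "v i - u i = v' i - u' i" unfolding u_def v'_def by simp
      then show ?thesis using u'(3) \<open>i < n\<close> by simp
    qed
  qed
  ultimately show ?case by blast
qed

lemma rw_ex:
  assumes k: "k < d"
  shows "\<exists>v. v \<in> L \<and> (\<forall>i>k. v i = 0) \<and> v k = cc L k \<and> (\<forall>i<k. 0 \<le> v i \<and> v i < cc L i)"
proof -
  obtain r where r: "r \<in> L" "\<forall>i>k. r i = 0" "r k = cc L k" using cc_row[OF k] by blast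
  obtain u where u: "u \<in> L" "\<forall>i\<ge>k. u i = 0" "\<forall>i<k. 0 \<le> r i - u i \<and> r i - u i < cc L i"
    using reduce[of k r] k by auto
  show ?thesis
    by (rule exI[of _ "\<lambda>i. r i - u i"]) (use diff_in[OF r(1) u(1)] r u in auto)
qed

lemma rw_props:
  assumes "k < d"
  shows "rw L k \<in> L" "\<forall>i>k. rw L k i = 0" "rw L k k = cc L k" "\<forall>i<k. 0 \<le> rw L k i \<and> rw L k i < cc L i"
  using someI_ex[OF rw_ex[OF assms]] unfolding rw_def by auto

lemma zero_lem:
  "n \<le> d \<Longrightarrow> w \<in> L \<Longrightarrow> \<forall>i\<ge>n. w i = 0 \<Longrightarrow> \<forall>i<n. \<bar>w i\<bar> < cc L i \<Longrightarrow> \<forall>i. w i = 0"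
proof (induction n)
  case 0 then show ?case by blast
next
  case (Suc n)
  then have n: "n < d" by simp
  have s: "\<forall>i>n. w i = 0" using Suc.prems(3) by (simp add: Suc_le_eq)
  have "cc L n dvd w n" using cc_dvd[OF n Suc.prems(2) s] .
  moreover have "\<bar>w n\<bar> < cc L n" using Suc.prems(4) by simp
  ultimately have wn: "w n = 0"
  proof (rule_tac ccontr)
    assume dv: "cc L n dvd w n" and lt: "\<bar>w n\<bar> < cc L n" and nz: "w n \<noteq> 0"
    have "\<bar>cc L n\<bar> \<le> \<bar>w n\<bar>" using dvd_imp_le_int[OF nz dv] .
    then show False using lt by linarith
  qed
  have a1: "\<forall>i\<ge>n. w i = 0"
  proof (intro allI impI)
    fix i assume "n \<le> i" then show "w i = 0" using wn s by (cases "i = n") auto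
  qed
  have a2: "\<forall>i<n. \<bar>w i\<bar> < cc L i" using Suc.prems(4) by simp
  show ?case by (rule Suc.IH[OF _ Suc.prems(2) a1 a2]) (use n in simp)
qed

lemma memb_iff:
  "n \<le> d \<Longrightarrow> \<forall>i\<ge>n. v i = 0 \<Longrightarrow> (v \<in> L \<longleftrightarrow> memb (cc L) (rw L) n v)"
proof (induction n arbitrary: v)
  case 0
  then have "v = (\<lambda>i. 0)" by auto
  then show ?case using zero_in by simp
next
  case (Suc n)
  then have n: "n < d" by simp
  define v' where "v' = (\<lambda>i. v i - (v n div cc L n) * rw L n i)"
  have v's: "\<forall>i\<ge>n. v' i = 0" if dv: "cc L n dvd v n"
  proof (intro allI impI)
    fix i assume "n \<le> i"
    show "v' i = 0"
    proof (cases "i = n")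
      case True
      show ?thesis using True rw_props(3)[OF n] dv unfolding v'_def by simp
    next
      case False
      then show ?thesis using \<open>n \<le> i\<close> rw_props(2)[OF n] Suc.prems(2) unfolding v'_def by auto
    qed
  qed
  have memb_eq: "memb (cc L) (rw L) (Suc n) v = (cc L n dvd v n \<and> memb (cc L) (rw L) n v')"
    unfolding v'_def by simp
  show ?case
  proof
    assume v: "v \<in> L"
    have dv: "cc L n dvd v n" using cc_dvd[OF n v] Suc.prems(2) by auto
    have "v' \<in> L" unfolding v'_def using lin_in[OF v rw_props(1)[OF n]] .
    then show "memb (cc L) (rw L) (Suc n) v" using Suc.IH[of v'] v's[OF dv] n memb_eq dv by auto
  next
    assume m: "memb (cc L) (rw L) (Suc n) v"
    then have dv: "cc L n dvd v n" by simp
    have "v' \<in> L" using Suc.IH[of v'] v's[OF dv] n memb_eq m by auto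
    then have "(\<lambda>i. v' i + (v n div cc L n) * rw L n i) \<in> L"
      using add_in smul_in rw_props(1)[OF n] by blast
    then show "v \<in> L" unfolding v'_def by simp
  qed
qed

lemma L_eq: "L = {v. (\<forall>i\<ge>d. v i = 0) \<and> memb (cc L) (rw L) d v}"
proof (intro set_eqI iffI)
  fix x assume x: "x \<in> L"
  have s: "\<forall>i\<ge>d. x i = 0" using subZ[OF x] by blast
  then show "x \<in> {v. (\<forall>i\<ge>d. v i = 0) \<and> memb (cc L) (rw L) d v}"
    using memb_iff[of d x] x by simp
next
  fix x assume "x \<in> {v. (\<forall>i\<ge>d. v i = 0) \<and> memb (cc L) (rw L) d v}"
  then show "x \<in> L" using memb_iff[of d x] by simp
qed

lemma prod_le: "(\<Prod>i<d. cc L i) \<le> int (card (cosets_Zd d L))"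
proof -
  define B where "B = {v::nat\<Rightarrow>int. (\<forall>i<d. v i \<in> {0..<cc L i}) \<and> (\<forall>i\<ge>d. v i = 0)}"
  have bij: "bij_betw (\<lambda>v. restrict v {..<d}) B (PiE {..<d} (\<lambda>i. {0..<cc L i}))"
    unfolding bij_betw_def
  proof
    show "inj_on (\<lambda>v. restrict v {..<d}) B"
      unfolding inj_on_def
    proof (intro ballI impI ext)
      fix u v i assume "u \<in> B" "v \<in> B" and e: "restrict u {..<d} = restrict v {..<d}"
      show "u i = v i"
      proof (cases "i < d")
        case True then show ?thesis using fun_cong[OF e, of i] by simp
      next
        case False then show ?thesis using \<open>u \<in> B\<close> \<open>v \<in> B\<close> unfolding B_def by simp
      qed
    qed
    show "(\<lambda>v. restrict v {..<d}) ` B = PiE {..<d} (\<lambda>i. {0..<cc L i})"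
    proof
      show "(\<lambda>v. restrict v {..<d}) ` B \<subseteq> PiE {..<d} (\<lambda>i. {0..<cc L i})"
      proof
        fix x assume "x \<in> (\<lambda>v. restrict v {..<d}) ` B"
        then obtain v where v: "v \<in> B" "x = restrict v {..<d}" by blast
        then show "x \<in> PiE {..<d} (\<lambda>i. {0..<cc L i})"
          unfolding restrict_PiE_iff B_def by simp
      qed
      show "PiE {..<d} (\<lambda>i. {0..<cc L i}) \<subseteq> (\<lambda>v. restrict v {..<d}) ` B"
      proof
        fix w assume w: "w \<in> PiE {..<d} (\<lambda>i. {0..<cc L i})"
        define v where "v = (\<lambda>i. if i < d then w i else 0)"
        have "v \<in> B" unfolding B_def
        proof (intro CollectI conjI allI impI)
          fix i assume "i < d" then show "v i \<in> {0..<cc L i}" using PiE_mem[OF w, of i] v_def by simp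
        next
          fix i assume "d \<le> i" then show "v i = 0" using v_def by simp
        qed
        moreover have "restrict v {..<d} = w"
        proof
          fix i show "restrict v {..<d} i = w i"
          proof (cases "i < d")
            case True then show ?thesis using v_def by simp
          next
            case False then show ?thesis using PiE_arb[OF w, of i] by simp
          qed
        qed
        ultimately show "w \<in> (\<lambda>v. restrict v {..<d}) ` B" by blast
      qed
    qed
  qed
  have "card B = (\<Prod>i<d. card {0..<cc L i})"
    using bij_betw_same_card[OF bij] card_PiE[of "{..<d}" "\<lambda>i. {0..<cc L i}"] by simp
  then have "int (card B) = (\<Prod>i<d. int (card {0..<cc L i}))" by (simp add: of_nat_prod)
  also have "\<dots> = (\<Prod>i<d. cc L i)"
  proof (rule prod.cong)
    fix x assume "x \<in> {..<d}"
    then have "0 < cc L x" using cc_pos by simp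
    then show "int (card {0..<cc L x}) = cc L x" by simp
  qed simp
  finally have cB: "int (card B) = (\<Prod>i<d. cc L i)" .
  define F where "F = (\<lambda>v. (\<lambda>w. (\<lambda>i. v i + w i)) ` L)"
  have inj: "inj_on F B"
  proof
    fix u v assume u: "u \<in> B" and v: "v \<in> B" and e: "F u = F v"
    have D: "(\<lambda>i. u i - v i) \<in> L" by (rule coset_eq_diff) (use e in \<open>simp add: F_def\<close>)
    have "\<forall>i. u i - v i = 0"
    proof (rule zero_lem[of d])
      show "\<forall>i\<ge>d. u i - v i = 0" using u v unfolding B_def by simp
      show "\<forall>i<d. \<bar>u i - v i\<bar> < cc L i"
      proof (intro allI impI)
        fix i assume i: "i < d"
        have "0 \<le> u i" "u i < cc L i" "0 \<le> v i" "v i < cc L i" using u v i unfolding B_def by auto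
        then show "\<bar>u i - v i\<bar> < cc L i" unfolding abs_less_iff by linarith
      qed
    qed (use D in simp_all)
    then show "u = v" by auto
  qed
  have "F ` B \<subseteq> cosets_Zd d L"
  proof
    fix x assume "x \<in> F ` B"
    then obtain v where v: "v \<in> B" "x = F v" by blast
    then have "v \<in> Zd d" unfolding B_def Zd_def by simp
    then show "x \<in> cosets_Zd d L" unfolding cosets_Zd_def v(2) F_def by blast
  qed
  from card_inj_on_le[OF inj this fc] cB show ?thesis by linarith
qed

end

lemma div_step:
  fixes m c y y' :: int
  assumes m: "m > 0" and c: "c > 0" and dv: "c dvd m * (y - y')"
    and eq: "y div (c div gcd m c) = y' div (c div gcd m c)"
  shows "y = y'"
proof -
  define g where "g = gcd m c"
  have g: "g > 0" unfolding g_def using m by simp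
  define D where "D = c div g"
  define m' where "m' = m div g"
  have cD: "c = D * g" unfolding D_def g_def by simp
  have mm: "m = m' * g" unfolding m'_def g_def by simp
  have cop: "coprime D m'"
    using div_gcd_coprime[of c m] c unfolding D_def m'_def g_def by (simp add: gcd.commute)
  have "D * g dvd (m' * (y - y')) * g" using dv cD mm by (simp add: ac_simps)
  then have "D dvd m' * (y - y')" using g by simp
  then have "D dvd (y - y')" using cop coprime_dvd_mult_right_iff by blast
  then have "y mod D = y' mod D" by (simp add: mod_eq_dvd_iff)
  moreover have "y div D = y' div D" using eq unfolding D_def g_def .
  ultimately show ?thesis by (metis div_mult_mod_eq)
qed

context lat
begin

lemma tq:
  "n \<le> d \<Longrightarrow> m > 0 \<Longrightarrow> (\<lambda>i. m * (y i - y' i)) \<in> L \<Longrightarrow> \<forall>i\<ge>n. y i - y' i = 0 \<Longrightarrow>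
   \<forall>i<n. y i div (cc L i div gcd m (cc L i)) = y' i div (cc L i div gcd m (cc L i)) \<Longrightarrow>
   \<forall>i. y i - y' i = 0"
proof (induction n)
  case 0 then show ?case by blast
next
  case (Suc n)
  then have n: "n < d" by simp
  have s: "\<forall>i>n. m * (y i - y' i) = 0" using Suc.prems(4) by (simp add: Suc_le_eq)
  have "cc L n dvd m * (y n - y' n)" using cc_dvd[OF n Suc.prems(3) s] by simp
  moreover have "y n div (cc L n div gcd m (cc L n)) = y' n div (cc L n div gcd m (cc L n))"
    using Suc.prems(5) by simp
  ultimately have yn: "y n = y' n" using div_step Suc.prems(2) cc_pos[OF n] by blast
  have a1: "\<forall>i\<ge>n. y i - y' i = 0"
  proof (intro allI impI)
    fix i assume "n \<le> i" then show "y i - y' i = 0" using yn Suc.prems(4) by (cases "i = n") simp_all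
  qed
  have a2: "\<forall>i<n. y i div (cc L i div gcd m (cc L i)) = y' i div (cc L i div gcd m (cc L i))"
    using Suc.prems(5) by simp
  show ?case by (rule Suc.IH[OF _ Suc.prems(2,3) a1 a2]) (use n in simp)
qed

end

definition mm :: "(nat \<Rightarrow> int) set \<Rightarrow> nat \<Rightarrow> int" where "mm L k = cc L k div cc L (Suc k)"

definition qq :: "(nat \<Rightarrow> int) set \<Rightarrow> nat \<Rightarrow> nat \<Rightarrow> int" where
  "qq L k i = rw L (Suc k) i div (cc L i div gcd (mm L k) (cc L i))"

locale ilat = lat +
  assumes shc: "\<And>v. v \<in> L \<Longrightarrow> v (d - 1) = 0 \<Longrightarrow> shiftv v \<in> L"
begin

lemma shift_row:
  assumes k: "Suc k < d"
  shows "shiftv (rw L k) \<in> L" "\<forall>i>Suc k. shiftv (rw L k) i = 0" "shiftv (rw L k) (Suc k) = cc L k"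
proof -
  have kd: "k < d" using k by simp
  have "rw L k (d - 1) = 0" using rw_props(2)[OF kd] k by simp
  then show "shiftv (rw L k) \<in> L" using shc rw_props(1)[OF kd] by blast
  show "\<forall>i>Suc k. shiftv (rw L k) i = 0" using rw_props(2)[OF kd] unfolding shiftv_def by simp
  show "shiftv (rw L k) (Suc k) = cc L k" using rw_props(3)[OF kd] unfolding shiftv_def by simp
qed

lemma chain_dvd: "Suc k < d \<Longrightarrow> cc L (Suc k) dvd cc L k"
  using cc_dvd[of "Suc k" "shiftv (rw L k)"] shift_row by simp


lemma mm_pos: "Suc k < d \<Longrightarrow> mm L k > 0"
proof -
  assume k: "Suc k < d"
  have p: "cc L k > 0" "cc L (Suc k) > 0" using cc_pos k by auto
  obtain t where t: "cc L k = cc L (Suc k) * t" using chain_dvd[OF k] by blast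
  have "t > 0" using p t by (simp add: zero_less_mult_iff)
  then show "mm L k > 0" unfolding mm_def using t p by simp
qed

lemma mm_mult: "Suc k < d \<Longrightarrow> mm L k * cc L (Suc k) = cc L k"
  unfolding mm_def using chain_dvd by simp


lemma qq_range:
  assumes k: "Suc k < d" and i: "i \<le> k"
  shows "0 \<le> qq L k i \<and> qq L k i < mm L k"
proof -
  have id: "i < d" "Suc k < d" using k i by auto
  define g where "g = gcd (mm L k) (cc L i)"
  have g1: "g > 0" using mm_pos[OF k] unfolding g_def by simp
  have g2: "g \<le> mm L k" unfolding g_def by (rule zdvd_imp_le) (use mm_pos[OF k] in simp_all)
  note g = g1 g2
  define D where "D = cc L i div g"
  have cD: "cc L i = D * g" unfolding D_def g_def by simp
  have Dp: "D > 0" using cD cc_pos[OF id(1)] g(1) by (simp add: zero_less_mult_iff)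
  have y: "0 \<le> rw L (Suc k) i" "rw L (Suc k) i < cc L i" using rw_props(4)[OF id(2)] i by auto
  have "rw L (Suc k) i mod D \<ge> 0" using Dp by simp
  then have "rw L (Suc k) i div D * D \<le> rw L (Suc k) i" using div_mult_mod_eq[of "rw L (Suc k) i" D] by linarith
  then have "rw L (Suc k) i div D * D < g * D" using y cD by (simp add: mult.commute)
  then have "rw L (Suc k) i div D < g" using Dp mult_less_cancel_right_pos by blast
  moreover have "0 \<le> rw L (Suc k) i div D" using y Dp by (simp add: pos_imp_zdiv_nonneg_iff)
  ultimately show ?thesis using g unfolding qq_def g_def D_def by simp
qed

end


lemma rows_eq:
  assumes A: "ilat d L" and B: "ilat d L'" and c: "\<forall>k<d. cc L k = cc L' k"
    and q: "\<forall>k i. Suc k < d \<longrightarrow> i \<le> k \<longrightarrow> qq L k i = qq L' k i"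
  shows "k < d \<Longrightarrow> \<forall>j\<le>k. rw L j = rw L' j"
proof (induction k)
  interpret a: ilat d L by (rule A)
  interpret b: ilat d L' by (rule B)
  case 0
  have "rw L 0 = rw L' 0"
  proof
    fix i show "rw L 0 i = rw L' 0 i"
      using a.rw_props[OF 0] b.rw_props[OF 0] c 0 by (cases "i = 0") simp_all
  qed
  then show ?case by simp
next
  interpret a: ilat d L by (rule A)
  interpret b: ilat d L' by (rule B)
  case (Suc k)
  have k: "Suc k < d" "k < d" using Suc.prems by auto
  have IH: "\<forall>j\<le>k. rw L j = rw L' j" using Suc.IH k by simp
  define y where "y = rw L (Suc k)"
  define y' where "y' = rw L' (Suc k)"
  define m where "m = mm L k"
  have mm': "mm L' k = m" unfolding m_def mm_def using c k by simp
  define s where "s = shiftv (rw L k)"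
  have sL: "s \<in> L" unfolding s_def using a.shift_row(1)[OF k(1)] .
  have sL': "s \<in> L'" unfolding s_def using b.shift_row(1)[OF k(1)] IH by simp
  have ss: "\<forall>i>Suc k. s i = 0" "s (Suc k) = cc L k" unfolding s_def using a.shift_row[OF k(1)] by simp_all
  define z where "z = (\<lambda>i. m * y i - s i)"
  define z' where "z' = (\<lambda>i. m * y' i - s i)"
  have zL: "z \<in> L" unfolding z_def y_def using a.diff_in[OF a.smul_in[OF a.rw_props(1)[OF k(1)]] sL] .
  have zL': "z' \<in> L'" unfolding z'_def y'_def using b.diff_in[OF b.smul_in[OF b.rw_props(1)[OF k(1)]] sL'] .
  have ysupp: "\<forall>i>Suc k. y i = 0" "y (Suc k) = cc L (Suc k)" unfolding y_def using a.rw_props[OF k(1)] by simp_all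
  have y'supp: "\<forall>i>Suc k. y' i = 0" "y' (Suc k) = cc L (Suc k)" unfolding y'_def using b.rw_props[OF k(1)] c k by simp_all
  have mc: "m * cc L (Suc k) = cc L k" unfolding m_def using a.mm_mult[OF k(1)] .
  have zs: "\<forall>i\<ge>Suc k. z i = 0"
  proof (intro allI impI)
    fix i assume "Suc k \<le> i"
    then show "z i = 0" unfolding z_def using ysupp ss mc by (cases "i = Suc k") simp_all
  qed
  have z's: "\<forall>i\<ge>Suc k. z' i = 0"
  proof (intro allI impI)
    fix i assume "Suc k \<le> i"
    then show "z' i = 0" unfolding z'_def using y'supp ss mc by (cases "i = Suc k") simp_all
  qed
  have "memb (cc L') (rw L') (Suc k) z'" using b.memb_iff[of "Suc k" z'] k z's zL' by simp
  moreover have "memb (cc L') (rw L') (Suc k) z' = memb (cc L) (rw L) (Suc k) z'"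
    by (rule memb_cong) (use c IH k in simp)
  ultimately have "memb (cc L) (rw L) (Suc k) z'" by simp
  then have z'L: "z' \<in> L" using a.memb_iff[of "Suc k" z'] k z's by simp
  have "(\<lambda>i. z i - z' i) \<in> L" using a.diff_in[OF zL z'L] .
  moreover have "(\<lambda>i. z i - z' i) = (\<lambda>i. m * (y i - y' i))" unfolding z_def z'_def by (simp add: algebra_simps)
  ultimately have dL: "(\<lambda>i. m * (y i - y' i)) \<in> L" by simp
  have d0: "\<forall>i\<ge>Suc k. y i - y' i = 0"
  proof (intro allI impI)
    fix i assume "Suc k \<le> i"
    then show "y i - y' i = 0" using ysupp y'supp by (cases "i = Suc k") simp_all
  qed
  have dq: "\<forall>i<Suc k. y i div (cc L i div gcd m (cc L i)) = y' i div (cc L i div gcd m (cc L i))"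
  proof (intro allI impI)
    fix i assume i: "i < Suc k"
    have "qq L k i = qq L' k i" using q k i by simp
    then show "y i div (cc L i div gcd m (cc L i)) = y' i div (cc L i div gcd m (cc L i))"
      unfolding qq_def y_def y'_def mm' using c i k m_def by simp
  qed
  have "\<forall>i. y i - y' i = 0"
    by (rule a.tq[OF _ _ dL d0 dq]) (use k a.mm_pos[OF k(1)] m_def in simp_all)
  then have "y = y'" by auto
  then show ?case using IH unfolding y_def y'_def by (metis le_Suc_eq)
qed

lemma ilat_inj:
  assumes A: "ilat d L" and B: "ilat d L'" and c: "\<forall>k<d. cc L k = cc L' k"
    and q: "\<forall>k i. Suc k < d \<longrightarrow> i \<le> k \<longrightarrow> qq L k i = qq L' k i"
  shows "L = L'"
proof -
  interpret a: ilat d L by (rule A)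
  interpret b: ilat d L' by (rule B)
  have r: "\<forall>j<d. rw L j = rw L' j" using rows_eq[OF A B c q] by blast
  have "\<And>v. memb (cc L) (rw L) d v = memb (cc L') (rw L') d v"
    by (rule memb_cong) (use c r in simp)
  then show ?thesis using a.L_eq b.L_eq by simp
qed


definition FS :: "nat \<Rightarrow> (nat \<Rightarrow> 'a set) \<Rightarrow> 'a \<Rightarrow> (nat \<Rightarrow> 'a) set" where
  "FS d S z = {v. (\<forall>i<d. v i \<in> S i) \<and> (\<forall>i\<ge>d. v i = z)}"

lemma FS_bij: "bij_betw (\<lambda>v. restrict v {..<d}) (FS d S z) (PiE {..<d} S)"
  unfolding bij_betw_def
proof
  show "inj_on (\<lambda>v. restrict v {..<d}) (FS d S z)"
    unfolding inj_on_def
  proof (intro ballI impI ext)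
    fix u v i assume "u \<in> FS d S z" "v \<in> FS d S z" and e: "restrict u {..<d} = restrict v {..<d}"
    show "u i = v i"
    proof (cases "i < d")
      case True then show ?thesis using fun_cong[OF e, of i] by simp
    next
      case False then show ?thesis using \<open>u \<in> FS d S z\<close> \<open>v \<in> FS d S z\<close> unfolding FS_def by simp
    qed
  qed
  show "(\<lambda>v. restrict v {..<d}) ` FS d S z = PiE {..<d} S"
  proof
    show "(\<lambda>v. restrict v {..<d}) ` FS d S z \<subseteq> PiE {..<d} S"
    proof
      fix x assume "x \<in> (\<lambda>v. restrict v {..<d}) ` FS d S z"
      then obtain v where v: "v \<in> FS d S z" "x = restrict v {..<d}" by blast
      then show "x \<in> PiE {..<d} S"
        unfolding restrict_PiE_iff FS_def by simp
    qed
    show "PiE {..<d} S \<subseteq> (\<lambda>v. restrict v {..<d}) ` FS d S z"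
    proof
      fix w assume w: "w \<in> PiE {..<d} S"
      define v where "v = (\<lambda>i. if i < d then w i else z)"
      have "v \<in> FS d S z" unfolding FS_def
      proof (intro CollectI conjI allI impI)
        fix i assume "i < d" then show "v i \<in> S i" using PiE_mem[OF w, of i] v_def by simp
      next
        fix i assume "d \<le> i" then show "v i = z" using v_def by simp
      qed
      moreover have "restrict v {..<d} = w"
      proof
        fix i show "restrict v {..<d} i = w i"
        proof (cases "i < d")
          case True then show ?thesis using v_def by simp
        next
          case False then show ?thesis using PiE_arb[OF w, of i] by simp
        qed
      qed
      ultimately show "w \<in> (\<lambda>v. restrict v {..<d}) ` FS d S z" by blast
    qed
  qed
qed

lemma FS_card: "card (FS d S z) = (\<Prod>i<d. card (S i))"
  using bij_betw_same_card[OF FS_bij[of d S z]] card_PiE[of "{..<d}" S] by simp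

lemma FS_finite: "(\<And>i. i < d \<Longrightarrow> finite (S i)) \<Longrightarrow> finite (FS d S z)"
  using bij_betw_finite[OF FS_bij[of d S z]] finite_PiE[of "{..<d}" S] by simp

lemma telescope:
  fixes c :: "nat \<Rightarrow> int"
  shows "(\<forall>k<n. c (Suc k) dvd c k) \<Longrightarrow> (\<Prod>k<n. (c k div c (Suc k)) ^ Suc k) * c n ^ n = (\<Prod>k<n. c k)"
proof (induction n)
  case 0 then show ?case by simp
next
  case (Suc n)
  have dv: "c (Suc n) dvd c n" using Suc.prems by simp
  have IH: "(\<Prod>k<n. (c k div c (Suc k)) ^ Suc k) * c n ^ n = (\<Prod>k<n. c k)" using Suc by simp
  have "(\<Prod>k<Suc n. (c k div c (Suc k)) ^ Suc k) * c (Suc n) ^ Suc n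
      = (\<Prod>k<n. (c k div c (Suc k)) ^ Suc k) * ((c n div c (Suc n)) * c (Suc n)) ^ Suc n"
    by (simp add: power_mult_distrib)
  also have "(c n div c (Suc n)) * c (Suc n) = c n" using dv by simp
  also have "(\<Prod>k<n. (c k div c (Suc k)) ^ Suc k) * c n ^ Suc n = ((\<Prod>k<n. (c k div c (Suc k)) ^ Suc k) * c n ^ n) * c n"
    by (simp add: algebra_simps)
  also have "\<dots> = (\<Prod>k<Suc n. c k)" using IH by simp
  finally show ?case .
qed

definition Pset :: "nat \<Rightarrow> (nat \<times> nat) set" where
  "Pset d = Sigma {..<d - 1} (\<lambda>k. {..k})"

definition Qset :: "nat \<Rightarrow> (nat \<Rightarrow> int) \<Rightarrow> (nat \<times> nat \<Rightarrow> int) set" where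
  "Qset d c = PiE (Pset d) (\<lambda>p. {0..<c (fst p) div c (Suc (fst p))})"

definition Cset :: "nat \<Rightarrow> nat \<Rightarrow> (nat \<Rightarrow> int) set" where
  "Cset d N = {c. (\<forall>k<d. 1 \<le> c k) \<and> (\<forall>k\<ge>d. c k = 0) \<and> (\<forall>k. Suc k < d \<longrightarrow> c (Suc k) dvd c k)
     \<and> (\<Prod>k<d. c k) \<le> int N}"

lemma Qset_card:
  assumes c: "c \<in> Cset d N" and d: "d \<ge> 1"
  shows "card (Qset d c) \<le> N"
proof -
  have fin: "finite (Pset d)" unfolding Pset_def by simp
  have pos: "\<And>k. k < d \<Longrightarrow> c k \<ge> 1" using c unfolding Cset_def by simp
  have mnn: "c k div c (Suc k) \<ge> 0" if k: "Suc k < d" for k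
  proof -
    have "c k \<ge> 1" "c (Suc k) \<ge> 1" using pos k by auto
    then show ?thesis by (simp add: pos_imp_zdiv_nonneg_iff)
  qed
  have "card (Qset d c) = (\<Prod>p\<in>Pset d. card {0..<c (fst p) div c (Suc (fst p))})"
    unfolding Qset_def by (rule card_PiE[OF fin])
  then have "int (card (Qset d c)) = (\<Prod>p\<in>Pset d. int (card {0..<c (fst p) div c (Suc (fst p))}))"
    by (simp only: of_nat_prod)
  also have "\<dots> = (\<Prod>p\<in>Pset d. c (fst p) div c (Suc (fst p)))"
  proof (rule prod.cong)
    fix p assume "p \<in> Pset d"
    then have "Suc (fst p) < d" unfolding Pset_def by auto
    then have "c (fst p) div c (Suc (fst p)) \<ge> 0" using mnn by simp
    then show "int (card {0..<c (fst p) div c (Suc (fst p))}) = c (fst p) div c (Suc (fst p))"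
      by simp
  qed simp
  also have "\<dots> = (\<Prod>(k,i)\<in>Sigma {..<d - 1} (\<lambda>k. {..k}). c k div c (Suc k))"
    unfolding Pset_def by (rule prod.cong) auto
  also have "\<dots> = (\<Prod>k<d - 1. \<Prod>i\<le>k. c k div c (Suc k))"
    by (rule prod.Sigma[symmetric]) auto
  also have "\<dots> = (\<Prod>k<d - 1. (c k div c (Suc k)) ^ Suc k)" by simp
  also have "\<dots> \<le> (\<Prod>k<d - 1. (c k div c (Suc k)) ^ Suc k) * c (d - 1) ^ (d - 1)"
  proof -
    have "c (d - 1) ^ (d - 1) \<ge> 1" using pos[of "d - 1"] d by simp
    moreover have "(\<Prod>k<d - 1. (c k div c (Suc k)) ^ Suc k) \<ge> 0"
      by (rule prod_nonneg) (use mnn in simp)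
    ultimately show ?thesis by (simp add: mult_le_cancel_left1)
  qed
  also have "\<dots> = (\<Prod>k<d - 1. c k)"
    by (rule telescope) (use c d in \<open>simp add: Cset_def\<close>)
  also have "\<dots> \<le> (\<Prod>k<d. c k)"
  proof (rule prod_mono2)
    fix a assume "a \<in> {..<d - 1}"
    then have "1 \<le> c a" using pos by simp
    then show "0 \<le> c a" by simp
  next
    fix b assume "b \<in> {..<d} - {..<d - 1}"
    then show "1 \<le> c b" using pos by simp
  qed auto
  also have "\<dots> \<le> int N" using c unfolding Cset_def by simp
  finally show ?thesis by simp
qed


lemma ideal_shift:
  assumes il: "ideal_lattice d L" and d: "d \<ge> 1" and v: "v \<in> L" and v0: "v (d - 1) = 0"
  shows "shiftv v \<in> L"
proof -
  obtain f J where fJ: "lead_coeff f = 1" "degree f = d" "is_ideal_Zx J" "f \<in> J" "L = rho_ideal f J"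
    using il unfolding ideal_lattice_def by blast
  obtain p where p: "v = (\<lambda>i. coeff p i)" "p \<in> J" "degree p < d"
    using v fJ(5,2) unfolding rho_ideal_def by blast
  have cp: "coeff p (d - 1) = 0" using v0 p(1) by simp
  have "[:0, 1:] * p \<in> J" using fJ(3) p(2) unfolding is_ideal_Zx_def by blast
  moreover have "[:0, 1:] * p = pCons 0 p" by simp
  ultimately have qJ: "pCons 0 p \<in> J" by simp
  have dq: "degree (pCons 0 p) < d"
  proof (cases "p = 0")
    case True then show ?thesis using d by simp
  next
    case False
    then have "coeff p (degree p) \<noteq> 0" by simp
    then have "degree p \<noteq> d - 1" using cp by metis
    then have "degree p < d - 1" using p(3) by simp
    then show ?thesis using False by (simp add: degree_pCons_eq)
  qed
  have "shiftv v = (\<lambda>i. coeff (pCons 0 p) i)"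
  proof
    fix i show "shiftv v i = coeff (pCons 0 p) i"
      unfolding shiftv_def p(1) by (cases i) simp_all
  qed
  then show ?thesis using qJ dq fJ(2,5) unfolding rho_ideal_def by auto
qed

definition ee :: "nat \<Rightarrow> nat" where "ee k = (if k = 0 then 1 else if k = 1 then 2 else 3)"

definition SS :: "nat \<Rightarrow> nat \<Rightarrow> int set" where "SS N k = {t. 1 \<le> t \<and> t ^ ee k \<le> int N}"

lemma SS_sub: "SS N k \<subseteq> {1..int N}"
proof
  fix t assume "t \<in> SS N k"
  then have t: "1 \<le> t" "t ^ ee k \<le> int N" unfolding SS_def by auto
  have "ee k \<ge> 1" unfolding ee_def by simp
  then have "t \<le> t ^ ee k" using t(1)
    by (metis One_nat_def le_add_diff_inverse power_increasing power_one_right zero_less_one less_le_trans)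
  then show "t \<in> {1..int N}" using t by simp
qed

lemma SS_finite: "finite (SS N k)"
  using finite_subset[OF SS_sub] by simp

lemma Cset_dec:
  assumes c: "c \<in> Cset d N"
  shows "j < d \<Longrightarrow> i \<le> j \<Longrightarrow> c j \<le> c i"
proof (induction j)
  case 0 then show ?case by simp
next
  case (Suc j)
  show ?case
  proof (cases "i = Suc j")
    case True then show ?thesis by simp
  next
    case False
    then have ij: "i \<le> j" using Suc.prems by simp
    have "c (Suc j) dvd c j" "c (Suc j) \<ge> 1" "c j \<ge> 1" using c Suc.prems unfolding Cset_def by auto
    then have "c (Suc j) \<le> c j" using zdvd_imp_le by simp
    then show ?thesis using Suc.IH ij Suc.prems by simp
  qed
qed

lemma Cset_subprod:
  assumes c: "c \<in> Cset d N" and A: "A \<subseteq> {..<d}"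
  shows "prod c A \<le> int N"
proof -
  have pos: "\<And>k. k < d \<Longrightarrow> c k \<ge> 1" using c unfolding Cset_def by simp
  have "prod c A \<le> (\<Prod>k<d. c k)"
  proof (rule prod_mono2)
    fix a assume "a \<in> A" then have "1 \<le> c a" using pos A by auto
    then show "0 \<le> c a" by simp
  next
    fix b assume "b \<in> {..<d} - A" then show "1 \<le> c b" using pos by simp
  qed (use A in auto)
  then show ?thesis using c unfolding Cset_def by simp
qed

lemma Cset_FS:
  assumes d: "d \<ge> 2"
  shows "Cset d N \<subseteq> FS d (SS N) 0"
proof
  fix c assume c: "c \<in> Cset d N"
  have pos: "\<And>k. k < d \<Longrightarrow> c k \<ge> 1" using c unfolding Cset_def by simp
  have "c k \<in> SS N k" if k: "k < d" for k
  proof (cases "k = 0")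
    case True
    have "prod c {0} \<le> int N" by (rule Cset_subprod[OF c]) (use k True in auto)
    then show ?thesis using True pos[OF k] unfolding SS_def ee_def by simp
  next
    case k0: False
    show ?thesis
    proof (cases "k = 1")
      case True
      have "prod c {0, 1} \<le> int N" by (rule Cset_subprod[OF c]) (use k True in auto)
      moreover have "c 1 \<le> c 0" using Cset_dec[OF c, of 1 0] k True by simp
      moreover have "prod c {0, 1} = c 0 * c 1" by simp
      moreover have "c 1 * c 1 \<le> c 0 * c 1" by (rule mult_right_mono) (use \<open>c 1 \<le> c 0\<close> pos[OF k] True in simp_all)
      ultimately have "c 1 * c 1 \<le> int N" by simp
      then show ?thesis using True pos[OF k] unfolding SS_def ee_def by (simp add: power2_eq_square)
    next
      case False
      have "prod c {0, 1, k} \<le> int N" by (rule Cset_subprod[OF c]) (use k k0 False in auto)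
      moreover have "prod c {0, 1, k} = c 0 * (c 1 * c k)" using k0 False by simp
      moreover have "c k \<le> c 1" "c k \<le> c 0" using Cset_dec[OF c, of k] k k0 False by auto
      moreover have "c k \<ge> 1" using pos[OF k] .
      ultimately have le: "prod c {0, 1, k} \<le> int N" "prod c {0, 1, k} = c 0 * (c 1 * c k)"
        "c k \<le> c 1" "c k \<le> c 0" "c k \<ge> 1" by auto
      have "c k * c k \<le> c 1 * c k" by (rule mult_right_mono) (use le in simp_all)
      then have "c k * (c k * c k) \<le> c 0 * (c 1 * c k)"
        using mult_mono[of "c k" "c 0" "c k * c k" "c 1 * c k"] le by simp
      moreover have "c 0 * (c 1 * c k) \<le> int N" using le(1) unfolding le(2) .
      ultimately have "c k * (c k * c k) \<le> int N" by (rule order_trans)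
      then show ?thesis using k0 False pos[OF k] unfolding SS_def ee_def by (simp add: power3_eq_cube)
    qed
  qed
  then show "c \<in> FS d (SS N) 0" unfolding FS_def using c unfolding Cset_def by auto
qed

lemma Cset_finite: "d \<ge> 2 \<Longrightarrow> finite (Cset d N)"
  using finite_subset[OF Cset_FS FS_finite[OF SS_finite]] by blast

lemma A_bound:
  assumes d: "d \<ge> 2"
  shows "A_count d N \<le> card (Cset d N) * N"
proof -
  define SA where "SA = {L. is_subgroup_Zd d L \<and> index_at_most d L N \<and> ideal_lattice d L}"
  define \<Phi> where "\<Phi> = (\<lambda>L. ((\<lambda>k. if k < d then cc L k else 0),
      (\<lambda>p. if p \<in> Pset d then qq L (fst p) (snd p) else undefined)))"
  have il: "ilat d L" if "L \<in> SA" for L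
  proof -
    have l: "lat d L" using that unfolding SA_def index_at_most_def lat_def by simp
    show ?thesis
    proof (rule ilat.intro[OF l], unfold_locales)
      fix v assume "v \<in> L" "v (d - 1) = 0"
      then show "shiftv v \<in> L" using ideal_shift[of d L v] that d unfolding SA_def by simp
    qed
  qed
  have pN: "(\<Prod>k<d. cc L k) \<le> int N" if "L \<in> SA" for L
  proof -
    interpret lat d L using il[OF that] by (simp add: ilat_def)
    show ?thesis using prod_le that unfolding SA_def index_at_most_def by simp
  qed
  have maps: "\<Phi> ` SA \<subseteq> Sigma (Cset d N) (Qset d)"
  proof
    fix x assume "x \<in> \<Phi> ` SA"
    then obtain L where L: "L \<in> SA" "x = \<Phi> L" by blast
    interpret ilat d L by (rule il[OF L(1)])
    define cv where "cv = (\<lambda>k. if k < d then cc L k else 0)"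
    have cvs: "cv \<in> Cset d N" unfolding Cset_def
    proof (intro CollectI conjI allI impI)
      fix k assume "k < d" then show "1 \<le> cv k" unfolding cv_def using cc_pos by fastforce
    next
      fix k assume "d \<le> k" then show "cv k = 0" unfolding cv_def by simp
    next
      fix k assume "Suc k < d" then show "cv (Suc k) dvd cv k" unfolding cv_def using chain_dvd by simp
    next
      have "(\<Prod>k<d. cv k) = (\<Prod>k<d. cc L k)" unfolding cv_def by simp
      then show "(\<Prod>k<d. cv k) \<le> int N" using pN[OF L(1)] by simp
    qed
    have qs: "(\<lambda>p. if p \<in> Pset d then qq L (fst p) (snd p) else undefined) \<in> Qset d cv"
      unfolding Qset_def
    proof (rule PiE_I)
      fix p assume p: "p \<in> Pset d"
      then have k: "Suc (fst p) < d" "snd p \<le> fst p" unfolding Pset_def by auto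
      have "cv (fst p) div cv (Suc (fst p)) = mm L (fst p)" unfolding cv_def mm_def using k by simp
      then show "(if p \<in> Pset d then qq L (fst p) (snd p) else undefined) \<in> {0..<cv (fst p) div cv (Suc (fst p))}"
        using qq_range[OF k] p by simp
    next
      fix p assume "p \<notin> Pset d" then show "(if p \<in> Pset d then qq L (fst p) (snd p) else undefined) = undefined" by simp
    qed
    show "x \<in> Sigma (Cset d N) (Qset d)" using cvs qs unfolding L(2) \<Phi>_def cv_def by simp
  qed
  have inj: "inj_on \<Phi> SA"
  proof
    fix L L' assume L: "L \<in> SA" and L': "L' \<in> SA" and e: "\<Phi> L = \<Phi> L'"
    have e1: "(\<lambda>k. if k < d then cc L k else 0) = (\<lambda>k. if k < d then cc L' k else 0)"
      using e unfolding \<Phi>_def by simp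
    have e2: "(\<lambda>p. if p \<in> Pset d then qq L (fst p) (snd p) else undefined) = (\<lambda>p. if p \<in> Pset d then qq L' (fst p) (snd p) else undefined)"
      using e unfolding \<Phi>_def by simp
    show "L = L'"
    proof (rule ilat_inj[OF il[OF L] il[OF L']])
      show "\<forall>k<d. cc L k = cc L' k"
      proof (intro allI impI)
        fix k assume "k < d" then show "cc L k = cc L' k" using fun_cong[OF e1, of k] by simp
      qed
      show "\<forall>k i. Suc k < d \<longrightarrow> i \<le> k \<longrightarrow> qq L k i = qq L' k i"
      proof (intro allI impI)
        fix k i assume "Suc k < d" "i \<le> k"
        then have "(k, i) \<in> Pset d" unfolding Pset_def by auto
        then show "qq L k i = qq L' k i" using fun_cong[OF e2, of "(k, i)"] by simp
      qed
    qed
  qed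
  have finT: "finite (Sigma (Cset d N) (Qset d))"
    using Cset_finite[OF d] unfolding Qset_def Pset_def by (auto intro!: finite_PiE)
  have "A_count d N = card SA" unfolding A_count_def SA_def by simp
  also have "\<dots> \<le> card (Sigma (Cset d N) (Qset d))" by (rule card_inj_on_le[OF inj maps finT])
  also have "\<dots> = (\<Sum>c\<in>Cset d N. card (Qset d c))"
  proof (rule card_SigmaI)
    show "finite (Cset d N)" using Cset_finite[OF d] .
    show "\<forall>a\<in>Cset d N. finite (Qset d a)" unfolding Qset_def Pset_def by (auto intro!: finite_PiE)
  qed
  also have "\<dots> \<le> (\<Sum>c\<in>Cset d N. N)"
    by (rule sum_mono) (use Qset_card d in simp)
  also have "\<dots> = card (Cset d N) * N" by simp
  finally show ?thesis .
qed


context lat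
begin
lemma cc_le_prod: "k < d \<Longrightarrow> cc L k \<le> (\<Prod>i<d. cc L i)"
proof -
  assume k: "k < d"
  have "prod (cc L) {k} \<le> prod (cc L) {..<d}"
  proof (rule prod_mono2)
    fix a assume "a \<in> {k}" then show "0 \<le> cc L a" using cc_pos k by (simp add: less_imp_le)
  next
    fix b assume "b \<in> {..<d} - {k}" then have "0 < cc L b" using cc_pos by simp
    then show "1 \<le> cc L b" by simp
  qed (use k in auto)
  then show ?thesis by simp
qed
end

lemma SB_finite: "finite {L. is_subgroup_Zd d L \<and> index_at_most d L N}"
proof -
  define SB where "SB = {L. is_subgroup_Zd d L \<and> index_at_most d L N}"
  define \<Psi> where "\<Psi> = (\<lambda>L. ((\<lambda>k. if k < d then cc L k else 0), (\<lambda>k. if k < d then rw L k else undefined)))"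
  define T where "T = FS d (\<lambda>_. {1..int N}) 0 \<times> PiE {..<d} (\<lambda>_. FS d (\<lambda>_. {0..int N}) 0)"
  have l: "lat d L" if "L \<in> SB" for L using that unfolding SB_def index_at_most_def lat_def by simp
  have finT: "finite T" unfolding T_def by (intro finite_cartesian_product FS_finite finite_PiE) auto
  have maps: "\<Psi> ` SB \<subseteq> T"
  proof
    fix x assume "x \<in> \<Psi> ` SB"
    then obtain L where L: "L \<in> SB" "x = \<Psi> L" by blast
    interpret lat d L by (rule l[OF L(1)])
    have cN: "cc L k \<le> int N" if "k < d" for k
      using cc_le_prod[OF that] prod_le L(1) unfolding SB_def index_at_most_def by simp
    have c1: "(\<lambda>k. if k < d then cc L k else 0) \<in> FS d (\<lambda>_. {1..int N}) 0"
      unfolding FS_def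
    proof (intro CollectI conjI allI impI)
      fix i assume i: "i < d"
      then have "0 < cc L i" using cc_pos by simp
      then show "(if i < d then cc L i else 0) \<in> {1..int N}" using cN[OF i] i by simp
    qed simp
    have r1: "(\<lambda>k. if k < d then rw L k else undefined) \<in> PiE {..<d} (\<lambda>_. FS d (\<lambda>_. {0..int N}) 0)"
    proof (rule PiE_I)
      fix k assume "k \<in> {..<d}"
      then have k: "k < d" by simp
      show "(if k < d then rw L k else undefined) \<in> FS d (\<lambda>_. {0..int N}) 0"
        unfolding FS_def
      proof (intro CollectI conjI allI impI)
        fix i assume i: "i < d"
        show "(if k < d then rw L k else undefined) i \<in> {0..int N}"
        proof (cases "i < k")
          case True
          then have "0 \<le> rw L k i" "rw L k i < cc L i" using rw_props(4)[OF k] by auto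
          then show ?thesis using cN[OF i] k by simp
        next
          case False
          show ?thesis
          proof (cases "i = k")
            case True
            then show ?thesis using rw_props(3)[OF k] cN[OF k] cc_pos[OF k] k by simp
          next
            case False
            then have "i > k" using \<open>\<not> i < k\<close> by simp
            then show ?thesis using rw_props(2)[OF k] k by simp
          qed
        qed
      next
        fix i assume "d \<le> i"
        then show "(if k < d then rw L k else undefined) i = 0" using rw_props(2)[OF k] k by simp
      qed
    qed simp
    show "x \<in> T" unfolding T_def L(2) \<Psi>_def using c1 r1 by simp
  qed
  have inj: "inj_on \<Psi> SB"
  proof
    fix L L' assume L: "L \<in> SB" and L': "L' \<in> SB" and e: "\<Psi> L = \<Psi> L'"
    interpret a: lat d L by (rule l[OF L])
    interpret b: lat d L' by (rule l[OF L'])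
    have e1: "(\<lambda>k. if k < d then cc L k else 0) = (\<lambda>k. if k < d then cc L' k else 0)"
      using e unfolding \<Psi>_def by simp
    have e2: "(\<lambda>k. if k < d then rw L k else undefined) = (\<lambda>k. if k < d then rw L' k else undefined)"
      using e unfolding \<Psi>_def by simp
    have "\<And>v. memb (cc L) (rw L) d v = memb (cc L') (rw L') d v"
    proof (rule memb_cong)
      fix i assume "i < d"
      then show "cc L i = cc L' i \<and> rw L i = rw L' i" using fun_cong[OF e1, of i] fun_cong[OF e2, of i] by simp
    qed
    then show "L = L'" using a.L_eq b.L_eq by simp
  qed
  show ?thesis using inj_on_finite[OF inj maps finT] unfolding SB_def .
qed

lemma coset_eq:
  assumes sg: "is_subgroup_Zd d L" and uv: "(\<lambda>i. u i - v i) \<in> L"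
  shows "(\<lambda>w. (\<lambda>i. u i + w i)) ` L = (\<lambda>w. (\<lambda>i. v i + w i)) ` L"
proof -
  have add: "\<And>x y. x \<in> L \<Longrightarrow> y \<in> L \<Longrightarrow> (\<lambda>i. x i + y i) \<in> L"
    and neg: "\<And>x. x \<in> L \<Longrightarrow> (\<lambda>i. - x i) \<in> L" using sg unfolding is_subgroup_Zd_def by auto
  show ?thesis
  proof (intro set_eqI iffI)
    fix x assume "x \<in> (\<lambda>w. (\<lambda>i. u i + w i)) ` L"
    then obtain w where w: "w \<in> L" "x = (\<lambda>i. u i + w i)" by blast
    have "(\<lambda>i. (u i - v i) + w i) \<in> L" using add[OF uv w(1)] by simp
    moreover have "x = (\<lambda>i. v i + ((u i - v i) + w i))" using w(2) by simp
    ultimately show "x \<in> (\<lambda>w. (\<lambda>i. v i + w i)) ` L"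
      using image_eqI[of x "\<lambda>w i. v i + w i" "\<lambda>i. u i - v i + w i" L] by simp
  next
    fix x assume "x \<in> (\<lambda>w. (\<lambda>i. v i + w i)) ` L"
    then obtain w where w: "w \<in> L" "x = (\<lambda>i. v i + w i)" by blast
    have "(\<lambda>i. - (u i - v i)) \<in> L" using neg[OF uv] .
    from add[OF this w(1)] have "(\<lambda>i. - (u i - v i) + w i) \<in> L" .
    moreover have "x = (\<lambda>i. u i + (- (u i - v i) + w i))" using w(2) by simp
    ultimately show "x \<in> (\<lambda>w. (\<lambda>i. u i + w i)) ` L"
      using image_eqI[of x "\<lambda>w i. u i + w i" "\<lambda>i. - (u i - v i) + w i" L] by simp
  qed
qed

definition LatB :: "nat \<Rightarrow> int \<Rightarrow> (nat \<Rightarrow> int) \<Rightarrow> (nat \<Rightarrow> int) set" where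
  "LatB d n a = {v. (\<forall>i\<ge>d. v i = 0) \<and> n dvd (\<Sum>i<d. a i * v i)}"

lemma LatB_sub: "is_subgroup_Zd d (LatB d n a)"
  unfolding is_subgroup_Zd_def
proof (intro conjI ballI)
  show "LatB d n a \<subseteq> Zd d" unfolding LatB_def Zd_def by auto
  show "(\<lambda>i. 0) \<in> LatB d n a" unfolding LatB_def by simp
next
  fix u v assume u: "u \<in> LatB d n a" and v: "v \<in> LatB d n a"
  have "(\<Sum>i<d. a i * (u i + v i)) = (\<Sum>i<d. a i * u i) + (\<Sum>i<d. a i * v i)"
    by (simp add: algebra_simps sum.distrib)
  then show "(\<lambda>i. u i + v i) \<in> LatB d n a" using u v unfolding LatB_def by simp
next
  fix u assume u: "u \<in> LatB d n a"
  have "(\<Sum>i<d. a i * (- u i)) = - (\<Sum>i<d. a i * u i)"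
    by (simp add: sum_negf)
  then show "(\<lambda>i. - u i) \<in> LatB d n a" using u unfolding LatB_def by simp
qed

definition e0 :: "int \<Rightarrow> nat \<Rightarrow> int" where "e0 t = (\<lambda>i. if i = 0 then t else 0)"

lemma sum_e0: "d > 0 \<Longrightarrow> (\<Sum>i<d. a i * e0 t i) = a 0 * t"
proof -
  assume d: "d > 0"
  have "(\<Sum>i<d. a i * e0 t i) = (\<Sum>i<d. if i = 0 then a 0 * t else 0)"
    unfolding e0_def by (rule sum.cong) auto
  also have "\<dots> = a 0 * t" using d by (simp add: sum.delta)
  finally show ?thesis .
qed

lemma LatB_index:
  assumes n: "n > 0" and d: "d > 0" and a0: "a 0 = 1"
  shows "index_at_most d (LatB d n a) (nat n)"
proof -
  let ?L = "LatB d n a"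
  define F where "F = (\<lambda>r. (\<lambda>w. (\<lambda>i. e0 r i + w i)) ` ?L)"
  have sub: "cosets_Zd d ?L \<subseteq> F ` {0..<n}"
  proof
    fix C assume "C \<in> cosets_Zd d ?L"
    then obtain v where v: "v \<in> Zd d" "C = (\<lambda>w. (\<lambda>i. v i + w i)) ` ?L" unfolding cosets_Zd_def by blast
    define r where "r = (\<Sum>i<d. a i * v i) mod n"
    have r: "r \<in> {0..<n}" unfolding r_def using n by simp
    have "(\<Sum>i<d. a i * (v i - e0 r i)) = (\<Sum>i<d. a i * v i) - (\<Sum>i<d. a i * e0 r i)"
      by (simp add: algebra_simps sum_subtractf)
    also have "\<dots> = (\<Sum>i<d. a i * v i) - r" using sum_e0[OF d] a0 by simp
    finally have "n dvd (\<Sum>i<d. a i * (v i - e0 r i))" unfolding r_def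
      by (simp add: mod_eq_dvd_iff[symmetric])
    moreover have "\<forall>i\<ge>d. v i - e0 r i = 0" using v(1) d unfolding Zd_def e0_def by simp
    ultimately have "(\<lambda>i. v i - e0 r i) \<in> ?L" unfolding LatB_def by simp
    then have "C = F r" unfolding v(2) F_def by (rule coset_eq[OF LatB_sub])
    then show "C \<in> F ` {0..<n}" using r by blast
  qed
  have "finite (cosets_Zd d ?L)" using finite_subset[OF sub] by simp
  moreover have "card (cosets_Zd d ?L) \<le> card (F ` {0..<n})" using card_mono[OF _ sub] by simp
  moreover have "card (F ` {0..<n}) \<le> nat n" using card_image_le[of "{0..<n}" F] by simp
  ultimately show ?thesis unfolding index_at_most_def by simp
qed

lemma LatB_inj:
  assumes d: "d > 0" and n: "n > 0" "n' > 0"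
    and a: "a \<in> FS d (\<lambda>i. if i = 0 then {1} else {0..<n}) 0"
    and a': "a' \<in> FS d (\<lambda>i. if i = 0 then {1} else {0..<n'}) 0"
    and e: "LatB d n a = LatB d n' a'"
  shows "n = n' \<and> a = a'"
proof -
  have a0: "a 0 = 1" "a' 0 = 1" using a a' d unfolding FS_def by auto
  have mem: "e0 t \<in> LatB d m b \<longleftrightarrow> m dvd t" if "b 0 = 1" for t m b
    unfolding LatB_def using sum_e0[OF d, of b t] that d by (simp add: e0_def)
  have "n dvd n'" using mem[of a n' n] mem[of a' n' n'] a0 e by simp
  moreover have "n' dvd n" using mem[of a n n] mem[of a' n n'] a0 e by simp
  ultimately have nn: "n = n'" using n by (simp add: zdvd_antisym_nonneg)
  have "a i = a' i" for i
  proof (cases "i = 0 \<or> i \<ge> d")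
    case True then show ?thesis using a0 a a' unfolding FS_def by auto
  next
    case False
    then have i: "0 < i" "i < d" by auto
    define w where "w = (\<lambda>j. if j = i then 1 else if j = 0 then - a i else (0::int))"
    have sw: "(\<Sum>j<d. b j * w j) = b i - b 0 * a i" for b :: "nat \<Rightarrow> int"
    proof -
      have "(\<Sum>j<d. b j * w j) = (\<Sum>j<d. (if j = i then b i else 0) + (if j = 0 then - b 0 * a i else 0))"
        unfolding w_def by (rule sum.cong) (use i in auto)
      also have "\<dots> = b i - b 0 * a i" using i d by (simp add: sum.distrib sum.delta)
      finally show ?thesis .
    qed
    have ws: "\<forall>j\<ge>d. w j = 0" unfolding w_def using i by auto
    have "w \<in> LatB d n a" unfolding LatB_def using ws sw[of a] a0 by simp
    then have "w \<in> LatB d n' a'" using e by simp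
    then have "n dvd a' i - a i" unfolding LatB_def using sw[of a'] a0 nn by simp
    moreover have "0 \<le> a i" "a i < n" "0 \<le> a' i" "a' i < n"
      using a a' i nn unfolding FS_def by auto
    ultimately show ?thesis
      by (metis mod_eq_dvd_iff mod_pos_pos_trivial)
  qed
  then show ?thesis using nn by auto
qed


lemma B_lower:
  assumes d: "d \<ge> 1"
  shows "(N div 2) ^ d \<le> B_count d N"
proof -
  define M where "M = N div 2"
  define S' where "S' = (\<lambda>i::nat. if i = 0 then {1::int} else {0..<int M})"
  define PB where "PB = {int M<..int N} \<times> FS d S' 0"
  define SB where "SB = {L. is_subgroup_Zd d L \<and> index_at_most d L N}"
  define G where "G = (\<lambda>(n, a). LatB d n a)"
  have maps: "G ` PB \<subseteq> SB"
  proof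
    fix x assume "x \<in> G ` PB"
    then obtain n a where na: "(n, a) \<in> PB" "x = LatB d n a" unfolding G_def by auto
    have n: "n > 0" "n \<le> int N" using na(1) unfolding PB_def by auto
    have a0: "a 0 = 1" using na(1) d unfolding PB_def FS_def S'_def by auto
    have "index_at_most d (LatB d n a) (nat n)" using LatB_index[of n d a] n(1) a0 d by simp
    moreover have "nat n \<le> N" using n(2) by (simp add: nat_le_iff)
    ultimately have "index_at_most d (LatB d n a) N" unfolding index_at_most_def by simp
    then show "x \<in> SB" unfolding SB_def na(2) using LatB_sub by simp
  qed
  have inj: "inj_on G PB"
  proof
    fix x y assume x: "x \<in> PB" and y: "y \<in> PB" and e: "G x = G y"
    obtain n a where xa: "x = (n, a)" by (cases x)
    obtain n' a' where ya: "y = (n', a')" by (cases y)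
    have n: "n > 0" "n' > 0" "n > int M" "n' > int M" using x y unfolding xa ya PB_def by auto
    have a: "a \<in> FS d (\<lambda>i. if i = 0 then {1} else {0..<n}) 0"
      using x n unfolding xa PB_def FS_def S'_def by auto
    have a': "a' \<in> FS d (\<lambda>i. if i = 0 then {1} else {0..<n'}) 0"
      using y n unfolding ya PB_def FS_def S'_def by auto
    have "LatB d n a = LatB d n' a'" using e unfolding xa ya G_def by simp
    from LatB_inj[OF _ n(1,2) a a' this] d show "x = y" unfolding xa ya by simp
  qed
  have "card (FS d S' 0) = (\<Prod>i<d. card (S' i))" by (rule FS_card)
  also have "\<dots> = M ^ (d - 1)"
  proof -
    obtain d' where d': "d = Suc d'" using d by (cases d) auto
    have "(\<Prod>i<d. card (S' i)) = card (S' 0) * (\<Prod>i<d'. card (S' (Suc i)))"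
      unfolding d' by (rule prod.lessThan_Suc_shift)
    also have "\<dots> = M ^ d'" unfolding S'_def by simp
    finally show ?thesis using d' by simp
  qed
  finally have cFS: "card (FS d S' 0) = M ^ (d - 1)" .
  have "M \<le> N" unfolding M_def by simp
  then have "nat (int N - int M) = N - M" by simp
  then have "card PB = (N - M) * M ^ (d - 1)"
    unfolding PB_def card_cartesian_product cFS by simp
  moreover have "M ^ d = M * M ^ (d - 1)" using d by (metis Suc_diff_1 less_le_trans zero_less_one power_Suc)
  moreover have "M \<le> N - M" unfolding M_def by simp
  ultimately have "M ^ d \<le> card PB" by simp
  also have "card PB \<le> card SB" by (rule card_inj_on_le[OF inj maps]) (use SB_finite in \<open>simp add: SB_def\<close>)
  finally show ?thesis unfolding M_def SB_def B_count_def .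
qed

lemma card_SS:
  assumes N: "N \<ge> 1"
  shows "real (card (SS N k)) \<le> real N powr (1 / real (ee k))"
proof -
  have e: "ee k > 0" unfolding ee_def by simp
  define K where "K = \<lfloor>root (ee k) (real N)\<rfloor>"
  have sub: "SS N k \<subseteq> {1..K}"
  proof
    fix t assume "t \<in> SS N k"
    then have t: "1 \<le> t" "t ^ ee k \<le> int N" unfolding SS_def by auto
    have "real_of_int t = root (ee k) (real_of_int t ^ ee k)" using e t(1) by (simp add: real_root_power_cancel)
    also have "\<dots> \<le> root (ee k) (real N)"
    proof (rule real_root_le_mono[OF e])
      have "real_of_int (t ^ ee k) \<le> real_of_int (int N)" using t(2) by linarith
      then show "real_of_int t ^ ee k \<le> real N" by simp
    qed
    finally have "t \<le> K" unfolding K_def by linarith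
    then show "t \<in> {1..K}" using t by simp
  qed
  have "card (SS N k) \<le> card {1..K}" by (rule card_mono) (use sub in auto)
  then have "real (card (SS N k)) \<le> real (nat K)" by simp
  also have "\<dots> \<le> root (ee k) (real N)"
  proof -
    have "0 \<le> root (ee k) (real N)" by (rule real_root_ge_zero) simp
    then show ?thesis unfolding K_def by linarith
  qed
  also have "\<dots> = real N powr (1 / real (ee k))" using e by (simp add: root_powr_inverse)
  finally show ?thesis .
qed

lemma sum_ee: "d \<ge> 2 \<Longrightarrow> (\<Sum>k<d. 1 / real (ee k)) = 3/2 + (real d - 2) / 3"
proof -
  assume d: "d \<ge> 2"
  obtain d' where d': "d = Suc (Suc d')" using d by (metis add_2_eq_Suc le_Suc_ex)
  have "(\<Sum>k<d. 1 / real (ee k)) = 1 / real (ee 0) + (1 / real (ee 1) + (\<Sum>k<d'. 1 / real (ee (Suc (Suc k)))))"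
    unfolding d' by (simp only: sum.lessThan_Suc_shift One_nat_def)
  also have "\<dots> = 3/2 + real d' / 3" unfolding ee_def by simp
  finally show ?thesis using d' by simp
qed

lemma A_real:
  assumes d: "d \<ge> 2" and N: "N \<ge> 1"
  shows "real (A_count d N) \<le> real N powr (5/2 + (real d - 2) / 3)"
proof -
  have "A_count d N \<le> card (Cset d N) * N" by (rule A_bound[OF d])
  also have "card (Cset d N) \<le> card (FS d (SS N) 0)"
    by (rule card_mono[OF FS_finite[OF SS_finite] Cset_FS[OF d]])
  finally have "real (A_count d N) \<le> real (card (FS d (SS N) 0)) * real N"
    by (metis mult_le_mono1 of_nat_le_iff of_nat_mult order_trans order_refl \<open>A_count d N \<le> card (Cset d N) * N\<close> \<open>card (Cset d N) \<le> card (FS d (SS N) 0)\<close>)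
  also have "real (card (FS d (SS N) 0)) = (\<Prod>k<d. real (card (SS N k)))"
    by (simp add: FS_card)
  also have "\<dots> \<le> (\<Prod>k<d. real N powr (1 / real (ee k)))"
    by (rule prod_mono) (use card_SS[OF N] in simp)
  also have "\<dots> = real N powr (\<Sum>k<d. 1 / real (ee k))"
    using N by (simp add: powr_sum)
  also have "\<dots> = real N powr (3/2 + (real d - 2) / 3)" using sum_ee[OF d] by simp
  finally have "real (A_count d N) \<le> real N powr (3/2 + (real d - 2) / 3) * real N" 
    using N by simp
  also have "\<dots> = real N powr (5/2 + (real d - 2) / 3)"
  proof -
    have eq: "5/2 + (real d - 2) / 3 = (3/2 + (real d - 2) / 3) + 1" by simp
    show ?thesis unfolding eq powr_add using N by simp
  qed
  finally show ?thesis .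
qed


theorem corollary4p2:
  fixes d :: nat
  assumes "d \<ge> 3"
  shows "(\<lambda>N. real (A_count d N) / real (B_count d N)) \<longlonglongrightarrow> 0"
proof (rule real_tendsto_sandwich)
  have d: "d \<ge> 3" by (rule assms)
  define \<alpha> where "\<alpha> = 5/2 + (real d - 2) / 3"
  show "\<forall>\<^sub>F N in sequentially. 0 \<le> real (A_count d N) / real (B_count d N)" by simp
  show "\<forall>\<^sub>F N in sequentially. real (A_count d N) / real (B_count d N) \<le> 3 ^ d * real N powr (- 1 / 6)"
    unfolding eventually_sequentially
  proof (intro exI allI impI)
    fix N :: nat assume N: "3 \<le> N"
    have Np: "real N > 0" using N by simp
    have M: "real (N div 2) \<ge> real N / 3"
    proof -
      have "N \<le> 2 * (N div 2) + 1" by simp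
      then have "real N \<le> 2 * real (N div 2) + 1" by linarith
      then show ?thesis using N by linarith
    qed
    have A: "real (A_count d N) \<le> real N powr \<alpha>" unfolding \<alpha>_def by (rule A_real) (use d N in simp_all)
    have "real ((N div 2) ^ d) \<le> real (B_count d N)" using B_lower[of d N] d by linarith
    then have B1: "real (N div 2) ^ d \<le> real (B_count d N)" by simp
    have B2: "(real N / 3) ^ d \<le> real (N div 2) ^ d" using power_mono[OF M, of d] Np by simp
    have B0: "(real N / 3) ^ d \<le> real (B_count d N)" using order_trans[OF B2 B1] .
    have pos: "(real N / 3) ^ d > 0" using Np by simp
    have "real (A_count d N) / real (B_count d N) \<le> real N powr \<alpha> / (real N / 3) ^ d"
      by (rule frac_le) (use A B0 pos in simp_all)
    also have "\<dots> = 3 ^ d * (real N powr \<alpha> / real N powr real d)"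
      using Np by (simp add: power_divide powr_realpow)
    also have "\<dots> = 3 ^ d * real N powr (\<alpha> - real d)" by (simp add: powr_diff)
    also have "\<dots> \<le> 3 ^ d * real N powr (- 1 / 6)"
    proof -
      have "real d \<ge> 3" using d by simp
      then have "\<alpha> - real d \<le> - 1 / 6" unfolding \<alpha>_def by (simp add: field_simps)
      then have "real N powr (\<alpha> - real d) \<le> real N powr (- 1 / 6)"
        by (rule powr_mono) (use N in simp)
      then show ?thesis by simp
    qed
    finally show "real (A_count d N) / real (B_count d N) \<le> 3 ^ d * real N powr (- 1 / 6)" .
  qed
  show "(\<lambda>N. 0) \<longlonglongrightarrow> 0" by simp
  have "(\<lambda>N. real N powr (- 1 / 6)) \<longlonglongrightarrow> 0"
    by (rule tendsto_neg_powr) (simp_all add: filterlim_real_sequentially)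
  then have "(\<lambda>N. 3 ^ d * real N powr (- 1 / 6)) \<longlonglongrightarrow> 3 ^ d * 0"
    by (intro tendsto_mult tendsto_const)
  then show "(\<lambda>N. 3 ^ d * real N powr (- 1 / 6)) \<longlonglongrightarrow> 0" by simp
qed

end
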